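(* In Euclidean 3-space $\mathbb{R}^3$ there is a nondegenerate polyhedron $P$ with the following properties: (1) $P$ is the image of a sphere-homeomorphic simplicial complex; (2) $P$ is rigid (i.e., not flexible); (3) there is a sequence of nondegenerate polyhedra $P_n$, $n=1,2,\dots$, such that (3a) for every $n$, $P_n$ and $P$ have the same combinatorial structure; (3b) $P_n$ is flexible for every $n$; (3c) $P_n$ tends to $P$ as $n\to\infty$.
   Context: A polyhedron is a continuous mapping from a finite 2-dimensional simplicial complex $K$ into $\mathbb{R}^3$ that is affine on each simplex of $K$ (the image is also called a polyhedron). The images of vertices, edges (1-simplices) and 2-simplices of $K$ are called vertices, edges and faces of the polyhedron. A polyhedron is nondegenerate if every face is a nondegenerate triangle (its three vertices are not collinear). Two nondegenerate polyhedra have the same combinatorial structure if they are mappings from the same simplicial complex $K$. A polyhedron is flexible if it admits a continuous deformation through polyhedra on the same complex $K$ during which every face remains congruent to itself (equivalently, all edge lengths are preserved), and which is not induced by a family of isometries of $\mathbb{R}^3$ (i.e., the spatial shape changes only through changes of dihedral angles); otherwise it is rigid. Convergence $P_n\to P$ of polyhedra on the same complex $K$ means that, for a fixed enumeration of the vertices of $K$, the coordinates of each vertex of $P_n$ converge to those of the corresponding vertex of $P$ (equivalently, the points of $\mathbb{R}^{3v}$ listing all vertex coordinates converge, $v$ being the number of vertices of $K$). *)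

theory Defs
  imports "HOL-Analysis.Analysis"
begin

text \<open>A finite 2-dimensional simplicial complex K, given by its set T of 2-simplices
 (triangles), each a 3-element set of vertex labels (natural numbers). The vertices and
 edges of K are the vertices and 2-element subsets of the triangles.\<close>

definition complex2 :: "nat set set \<Rightarrow> bool" where
  "complex2 T \<longleftrightarrow> finite T \<and> T \<noteq> {} \<and> (\<forall>F\<in>T. card F = 3)"

definition verts :: "nat set set \<Rightarrow> nat set" where
  "verts T = \<Union>T"

text \<open>Standard geometric realization of K inside the space of functions nat => real
 (product topology): the union of the standard simplices spanned by the triangles.\<close>

definition realization :: "nat set set \<Rightarrow> (nat \<Rightarrow> real) set" where
  "realization T = {x. \<exists>F\<in>T. (\<forall>i. i \<notin> F \<longrightarrow> x i = 0) \<and> (\<forall>i. 0 \<le> x i) \<and> (\<Sum>i\<in>F. x i) = 1}"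

definition sphere_homeomorphic :: "nat set set \<Rightarrow> bool" where
  "sphere_homeomorphic T \<longleftrightarrow> realization T homeomorphic sphere (0::real^3) 1"

text \<open>A polyhedron on K is determined by the positions p v of the vertices v.\<close>

definition nondegenerate :: "nat set set \<Rightarrow> (nat \<Rightarrow> real^3) \<Rightarrow> bool" where
  "nondegenerate T p \<longleftrightarrow> (\<forall>F\<in>T. \<not> collinear (p ` F))"

definition flexible :: "nat set set \<Rightarrow> (nat \<Rightarrow> real^3) \<Rightarrow> bool" where
  "flexible T p \<longleftrightarrow> (\<exists>f :: real \<Rightarrow> nat \<Rightarrow> real^3.
      (\<forall>v\<in>verts T. continuous_on {0..1} (\<lambda>t. f t v)) \<and>
      (\<forall>v\<in>verts T. f 0 v = p v) \<and>
      (\<forall>t\<in>{0..1}. \<forall>F\<in>T. \<forall>a\<in>F. \<forall>b\<in>F. dist (f t a) (f t b) = dist (p a) (p b)) \<and>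
      \<not> (\<forall>t\<in>{0..1}. \<exists>g :: real^3 \<Rightarrow> real^3.
            (\<forall>x y. dist (g x) (g y) = dist x y) \<and> (\<forall>v\<in>verts T. g (p v) = f t v)))"

end

theory Submission
  imports Defs
begin


lemma vec3_eq: "(vector [a,b,c] :: real^3) = (\<chi> i. if i = 1 then a else if i = 2 then b else c)"
  by (simp add: vec_eq_iff forall_3)

lemma vec3_diff: "(vector [a,b,c] :: real^3) - vector [d,e,f] = vector [a-d,b-e,c-f]"
  by (simp add: vec_eq_iff forall_3)

lemma vec3_zero: "(0::real^3) = vector [0,0,0]"
  by (simp add: vec_eq_iff forall_3)

lemma nsq3: "(norm (vector [a,b,c] :: real^3))\<^sup>2 = a\<^sup>2 + b\<^sup>2 + c\<^sup>2"
  by (simp only: power2_norm_eq_inner) (simp add: inner_vec_def sum_3 power2_eq_square)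

lemma dist3: "dist (vector [a,b,c] :: real^3) (vector [d,e,f]) = sqrt ((a-d)\<^sup>2 + (b-e)\<^sup>2 + (c-f)\<^sup>2)"
  by (metis dist_norm vec3_diff nsq3 norm_ge_zero real_sqrt_unique)

lemma cont_vec3:
  assumes "continuous_on S f1" "continuous_on S f2" "continuous_on S f3"
  shows "continuous_on S (\<lambda>x. vector [f1 x, f2 x, f3 x] :: real^3)"
  unfolding vec3_eq
  apply (intro continuous_on_vec_lambda)
  subgoal for i by (cases "i = 1"; cases "i = 2") (auto simp: assms)
  done

definition cfg :: "real \<Rightarrow> real \<Rightarrow> nat \<Rightarrow> real^3" where
  "cfg e m v = (if v = 2 then vector [1,0,0] else if v = 3 then vector [1, m, sqrt (1 - m\<^sup>2)]
     else if v = 4 then vector [(1 - m\<^sup>2)/(1 + m\<^sup>2), 2*m/(1+m\<^sup>2), 0]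
     else if v = 5 then vector [1, -1/m, sqrt (1 + e\<^sup>2 - 1/m\<^sup>2)] else vector [0,0,0])"

locale mrange = fixes e m :: real assumes m0: "0 < m" and m1: "m \<le> 1" and me: "1/m\<^sup>2 \<le> 1 + e\<^sup>2"
begin
lemma s1: "(sqrt (1 - m\<^sup>2))\<^sup>2 = 1 - m\<^sup>2"
proof -
  have "m\<^sup>2 \<le> 1" using m0 m1 by (simp add: power_le_one)
  then show ?thesis by simp
qed
lemma s2: "(sqrt (1 + e\<^sup>2 - 1/m\<^sup>2))\<^sup>2 = 1 + e\<^sup>2 - 1/m\<^sup>2"
  using me by simp

lemma d02: "dist (cfg e m 0) (cfg e m 2) = 1" by (simp add: cfg_def dist3)
lemma d03: "dist (cfg e m 0) (cfg e m 3) = sqrt 2" by (simp add: cfg_def dist3 s1)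
lemma d04: "dist (cfg e m 0) (cfg e m 4) = 1"
proof -
  have p: "1 + m\<^sup>2 \<noteq> 0" by (metis add_pos_nonneg zero_less_one zero_le_power2 less_irrefl)
  have "((1 - m\<^sup>2) / (1 + m\<^sup>2))\<^sup>2 + (2 * m / (1 + m\<^sup>2))\<^sup>2 = 1"
    using p by (simp add: field_simps) algebra
  then show ?thesis by (simp add: cfg_def dist3)
qed
lemma d05: "dist (cfg e m 0) (cfg e m 5) = sqrt (2 + e\<^sup>2)"
  using m0 by (simp add: cfg_def dist3 s2 power_divide)
lemma d23: "dist (cfg e m 2) (cfg e m 3) = 1" by (simp add: cfg_def dist3 s1)
lemma d25: "dist (cfg e m 2) (cfg e m 5) = sqrt (1 + e\<^sup>2)"
  using m0 by (simp add: cfg_def dist3 s2 power_divide)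
lemma d34: "dist (cfg e m 3) (cfg e m 4) = 1"
proof -
  have p: "1 + m\<^sup>2 > 0" by (simp add: add_pos_nonneg)
  have "(1 - (1 - m\<^sup>2) / (1 + m\<^sup>2))\<^sup>2 + (m - 2 * m / (1 + m\<^sup>2))\<^sup>2 + (1 - m\<^sup>2) = 1"
    using p by (simp add: field_simps) algebra
  then show ?thesis by (simp add: cfg_def dist3 s1)
qed
lemma d45: "dist (cfg e m 4) (cfg e m 5) = sqrt (5 + e\<^sup>2)"
proof -
  have key: "((1 - m\<^sup>2) / u - 1)\<^sup>2 + (2 * m / u - - 1 / m)\<^sup>2 + (1 + e\<^sup>2 - 1 / m\<^sup>2) = 5 + e\<^sup>2"
    if u: "u = 1 + m\<^sup>2" "u > 0" for u
  proof -
    have "m \<noteq> 0" using m0 by simp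
    then have "((1 - m\<^sup>2) / u - 1)\<^sup>2 + (2 * m / u - - 1 / m)\<^sup>2 + (1 + e\<^sup>2 - 1 / m\<^sup>2) - (5 + e\<^sup>2)
      = ((1 - m\<^sup>2 - u)^2 * m^2 + (2*m*m + u)^2 - u^2 - 4 * u^2 * m^2) / (u^2 * m^2)"
      using u(2) by (simp add: field_simps power2_eq_square)
    also have "... = 0" using u(1) by (simp add: algebra_simps power2_eq_square)
    finally show ?thesis by simp
  qed
  have p: "1 + m\<^sup>2 > 0" by (simp add: add_pos_nonneg)
  show ?thesis using key[OF refl p] by (simp add: cfg_def dist3 s2)
qed
lemma c10: "cfg e m 1 = cfg e m 0" "cfg e m (Suc 0) = cfg e m 0" by (simp_all add: cfg_def)
end

definition Toct :: "nat set set" where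
  "Toct = {{0,2,3},{0,4,3},{0,2,5},{0,4,5},{1,2,3},{1,4,3},{1,2,5},{1,4,5}}"

lemma verts_Toct: "verts Toct = {0,1,2,3,4,5}"
  unfolding verts_def Toct_def by auto

lemma face_dist:
  assumes "mrange e m" "mrange e m'" "F \<in> Toct" "a \<in> F" "b \<in> F"
  shows "dist (cfg e m a) (cfg e m b) = dist (cfg e m' a) (cfg e m' b)"
proof -
  interpret A: mrange e m by fact
  interpret B: mrange e m' by fact
  show ?thesis using assms(3-5) unfolding Toct_def
    by (auto simp: A.d02 A.d03 A.d04 A.d05 A.d23 A.d25 A.d34 A.d45 A.c10
       B.d02 B.d03 B.d04 B.d05 B.d23 B.d25 B.d34 B.d45 B.c10 dist_commute)
qed

lemma mrange1: "mrange e 1" by unfold_locales auto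



lemma sq: "dist x y = r \<Longrightarrow> (y - x) \<bullet> (y - x) = r\<^sup>2"
  by (metis dist_commute dist_norm power2_norm_eq_inner)

lemma rigid_core:
  fixes q :: "nat \<Rightarrow> real^3"
  assumes H: "\<forall>F\<in>Toct. \<forall>a\<in>F. \<forall>b\<in>F. dist (q a) (q b) = dist (cfg 0 1 a) (cfg 0 1 b)"
  shows "\<exists>g. (\<forall>x y. dist (g x) (g y) = dist x y) \<and> (\<forall>v\<in>verts Toct. g (cfg 0 1 v) = q v)"
proof -
  interpret P: mrange 0 1 by (rule mrange1)
  have h: "\<And>a b F. F \<in> Toct \<Longrightarrow> a\<in>F \<Longrightarrow> b\<in>F \<Longrightarrow> dist (q a) (q b) = dist (cfg 0 1 a) (cfg 0 1 b)"
    using H by blast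
  have T: "{0,2,3} \<in> Toct" "{0,4,3} \<in> Toct" "{0,2,5} \<in> Toct" "{0,4,5} \<in> Toct"
     "{1,2,3} \<in> Toct" "{1,4,3} \<in> Toct" by (auto simp: Toct_def)
  have e02: "dist (q 0) (q 2) = 1" using h[OF T(1), of 0 2] P.d02 by simp
  have e03: "dist (q 0) (q 3) = sqrt 2" using h[OF T(1), of 0 3] P.d03 by simp
  have e04: "dist (q 0) (q 4) = 1" using h[OF T(2), of 0 4] P.d04 by simp
  have e05: "dist (q 0) (q 5) = sqrt 2" using h[OF T(3), of 0 5] P.d05 by simp
  have e23: "dist (q 2) (q 3) = 1" using h[OF T(1), of 2 3] P.d23 by simp
  have e25: "dist (q 2) (q 5) = 1" using h[OF T(3), of 2 5] P.d25 by simp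
  have e34: "dist (q 3) (q 4) = 1" using h[OF T(2), of 3 4] P.d34 by simp
  have e45: "dist (q 4) (q 5) = sqrt 5" using h[OF T(4), of 4 5] P.d45 by simp
  have e12: "dist (q 1) (q 2) = 1" using h[OF T(5), of 1 2] P.d02 P.c10 by simp
  have e13: "dist (q 1) (q 3) = sqrt 2" using h[OF T(5), of 1 3] P.d03 P.c10 by simp
  have e14: "dist (q 1) (q 4) = 1" using h[OF T(6), of 1 4] P.d04 P.c10 by simp
  define z0 where "z0 = q 0"
  define u2 where "u2 = q 2 - z0"
  define u3 where "u3 = q 3 - z0"
  define u4 where "u4 = q 4 - z0"
  define u5 where "u5 = q 5 - z0"
  define w where "w = q 1 - z0"
  have Q: "q 2 = z0 + u2" "q 3 = z0 + u3" "q 4 = z0 + u4" "q 5 = z0 + u5" "q 1 = z0 + w" "q (Suc 0) = z0 + w" "q 0 = z0"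
    by (simp_all add: u2_def u3_def u4_def u5_def w_def z0_def)
  have n2: "u2 \<bullet> u2 = 1" using sq[OF e02] by (simp add: Q)
  have n3: "u3 \<bullet> u3 = 2" using sq[OF e03] by (simp add: Q)
  have n4: "u4 \<bullet> u4 = 1" using sq[OF e04] by (simp add: Q)
  have n5: "u5 \<bullet> u5 = 2" using sq[OF e05] by (simp add: Q)
  have i23: "u2 \<bullet> u3 = 1" using sq[OF e23] n2 n3
    by (simp add: Q inner_diff_left inner_diff_right inner_commute)
  have i25: "u2 \<bullet> u5 = 1" using sq[OF e25] n2 n5
    by (simp add: Q inner_diff_left inner_diff_right inner_commute)
  have i34: "u3 \<bullet> u4 = 1" using sq[OF e34] n4 n3
    by (simp add: Q inner_diff_left inner_diff_right inner_commute)
  have i45: "u4 \<bullet> u5 = -1" using sq[OF e45] n4 n5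
    by (simp add: Q inner_diff_left inner_diff_right inner_commute)
  have w2: "w \<bullet> w = 2 * (w \<bullet> u2)" using sq[OF e12] n2
    by (simp add: Q inner_diff_left inner_diff_right inner_commute)
  have w3: "w \<bullet> w = 2 * (w \<bullet> u3)" using sq[OF e13] n3
    by (simp add: Q inner_diff_left inner_diff_right inner_commute)
  have w4: "w \<bullet> w = 2 * (w \<bullet> u4)" using sq[OF e14] n4
    by (simp add: Q inner_diff_left inner_diff_right inner_commute)
  have A1: "0 \<le> (u3 - u2 - u4) \<bullet> (u3 - u2 - u4)" by simp
  have A2: "0 \<le> (u5 - u2 + u4) \<bullet> (u5 - u2 + u4)" by simp
  have X: "u2 \<bullet> u4 = 0"
    using A1 A2 n2 n3 n4 n5 i23 i25 i34 i45
    by (simp add: inner_diff_left inner_diff_right inner_add_left inner_add_right inner_commute)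
  have "(u3 - u2 - u4) \<bullet> (u3 - u2 - u4) = 0"
    using X n2 n3 n4 n5 i23 i25 i34 i45
    by (simp add: inner_diff_left inner_diff_right inner_add_left inner_add_right inner_commute)
  then have "u3 - u2 - u4 = 0" by (simp only: inner_eq_zero_iff)
  then have U3: "u3 = u2 + u4"
    by (metis diff_diff_eq eq_iff_diff_eq_0)
  have "(u5 - u2 + u4) \<bullet> (u5 - u2 + u4) = 0"
    using X n2 n3 n4 n5 i23 i25 i34 i45
    by (simp add: inner_diff_left inner_diff_right inner_add_left inner_add_right inner_commute)
  then have z: "u5 - u2 + u4 = 0" by (simp only: inner_eq_zero_iff)
  have "u5 = (u5 - u2 + u4) + u2 - u4" by simp
  then have U5: "u5 = u2 - u4" using z by simp
  have "w \<bullet> w = 0" using w2 w3 w4 U3 by (simp add: inner_add_right)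
  then have W: "w = 0" by simp
  define e3 where "e3 = cross3 u2 u4"
  have n6: "e3 \<bullet> e3 = 1" using norm_cross[of u2 u4] n2 n4 X
    by (simp add: e3_def power2_norm_eq_inner)
  have i26: "u2 \<bullet> e3 = 0" "u4 \<bullet> e3 = 0" using dot_cross_self[of u2 u4]
    by (simp_all add: e3_def inner_commute)
  define g where "g x = z0 + (x$1) *\<^sub>R u2 + (x$2) *\<^sub>R u4 + (x$3) *\<^sub>R e3" for x :: "real^3"
  have "dist (g x) (g y) = dist x y" for x y
  proof -
    have "g x - g y = (x$1 - y$1) *\<^sub>R u2 + (x$2 - y$2) *\<^sub>R u4 + (x$3 - y$3) *\<^sub>R e3"
      by (simp add: g_def algebra_simps)
    then have "(g x - g y) \<bullet> (g x - g y) = (x$1 - y$1)^2 + (x$2 - y$2)^2 + (x$3 - y$3)^2"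
      using n2 n4 n6 X i26
      by (simp add: inner_add_left inner_add_right inner_commute power2_eq_square)
    also have "... = (x - y) \<bullet> (x - y)"
      by (simp add: inner_vec_def sum_3 power2_eq_square)
    finally show ?thesis by (simp add: dist_norm norm_eq_sqrt_inner)
  qed
  moreover have "\<forall>v\<in>verts Toct. g (cfg 0 1 v) = q v"
    by (auto simp: verts_Toct g_def cfg_def Q U3 U5 W)
  ultimately show ?thesis by blast
qed



lemma cfg1: "e \<ge> 0 \<Longrightarrow> cfg e 1 v = (if v = 2 then vector [1,0,0] else if v = 3 then vector [1,1,0]
   else if v = 4 then vector [0,1,0] else if v = 5 then vector [1,-1,e] else 0)"
  by (simp add: cfg_def vec3_zero)

lemma noncol:
  fixes x y :: "real^3"
  assumes "x$1*y$2 \<noteq> x$2*y$1 \<or> x$1*y$3 \<noteq> x$3*y$1 \<or> x$2*y$3 \<noteq> x$3*y$2"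
  shows "\<not> collinear {0,x,y}"
  using assms unfolding collinear_lemma by auto

lemma nondeg_cfg1: "e \<ge> 0 \<Longrightarrow> nondegenerate Toct (cfg e 1)"
  unfolding nondegenerate_def Toct_def
  by (auto simp: cfg1 intro!: noncol)

lemma d24sq: "mrange e m \<Longrightarrow> (dist (cfg e m 2) (cfg e m 4))\<^sup>2 = 4*m\<^sup>2/(1+m\<^sup>2)"
proof -
  assume "mrange e m"
  have p: "1 + m\<^sup>2 \<noteq> 0" by (metis add_pos_nonneg zero_less_one zero_le_power2 less_irrefl)
  have "(1 - (1 - m\<^sup>2) / (1 + m\<^sup>2))\<^sup>2 + (0 - 2 * m / (1 + m\<^sup>2))\<^sup>2 = 4*m\<^sup>2/(1+m\<^sup>2)"
    using p by (simp add: field_simps) algebra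
  then show ?thesis by (simp add: cfg_def dist3)
qed

definition ep :: "nat \<Rightarrow> real" where "ep n = inverse (real (Suc n))"
definition eta :: "nat \<Rightarrow> real" where "eta n = (ep n)\<^sup>2 / 4"

lemma ep_bounds: "0 < ep n" "ep n \<le> 1"
  by (auto simp: ep_def field_simps)

lemma mrange_t:
  assumes t: "0 \<le> t" "t \<le> 1"
  shows "mrange (ep n) (1 - t * eta n)"
proof
  define e where "e = ep n"
  have e: "0 < e" "e \<le> 1" using ep_bounds e_def by auto
  have eta: "eta n = e\<^sup>2/4" by (simp add: eta_def e_def)
  have e2: "e\<^sup>2 \<le> 1" using e by (simp add: power_le_one)
  have h0: "0 \<le> t * eta n" "t * eta n \<le> e\<^sup>2/4" using t e2 
    by (auto simp: eta mult_left_le_one_le)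
  show "0 < 1 - t * eta n" using h0 e2 by linarith
  show "1 - t * eta n \<le> 1" using h0 by linarith
  define m where "m = 1 - t * eta n"
  have m: "1 - e\<^sup>2/4 \<le> m" "m \<le> 1" "0 < m" using h0 e2 by (auto simp: m_def)
  have "1 \<le> (1 + e\<^sup>2) * m\<^sup>2"
  proof -
    have "(1 - e\<^sup>2/4)\<^sup>2 \<le> m\<^sup>2" using m e2 by (intro power_mono) auto
    moreover have "1 \<le> (1 + e\<^sup>2) * (1 - e\<^sup>2/4)\<^sup>2"
    proof -
      have "(1 + e\<^sup>2) * (1 - e\<^sup>2/4)\<^sup>2 - 1 = e\<^sup>2 * (1/2 - (e\<^sup>2)*(7/16) + (e\<^sup>2)^2/16)"
        by (simp add: power2_eq_square field_simps)
      moreover have "0 \<le> 1/2 - (e\<^sup>2)*(7/16) + (e\<^sup>2)^2/16" using e2 zero_le_power2[of "e\<^sup>2"] by linarith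
      moreover have "0 \<le> e\<^sup>2 * (1/2 - (e\<^sup>2)*(7/16) + (e\<^sup>2)^2/16)"
        using calculation(2) by simp
      ultimately show ?thesis by linarith
    qed
    ultimately show ?thesis
      by (smt (verit) mult_left_mono zero_le_power2)
  qed
  then show "1 / (1 - t * eta n)\<^sup>2 \<le> 1 + (ep n)\<^sup>2" using m(3)
    by (simp add: m_def[symmetric] e_def[symmetric] divide_le_eq)
qed

lemma flex_P: "flexible Toct (cfg (ep n) 1)"
  unfolding flexible_def
proof (intro exI conjI)
  define f where "f t = cfg (ep n) (1 - t * eta n)" for t
  have e: "0 < ep n" "ep n \<le> 1" by (rule ep_bounds)+
  have eta0: "0 < eta n" "eta n \<le> 1/4"
    using e by (auto simp: eta_def power_le_one)
  show "\<forall>v\<in>verts Toct. continuous_on {0..1} (\<lambda>t. cfg (ep n) (1 - t * eta n) v)"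
  proof
    fix v assume "v \<in> verts Toct"
    have pos: "1 - t * eta n > 0" if "t \<in> {0..1}" for t
      using mrange_t[of t n] that by (auto simp: mrange_def)
    have pos2: "1 + (1 - t * eta n)\<^sup>2 \<noteq> 0" for t
      by (metis add_pos_nonneg zero_less_one zero_le_power2 less_irrefl)
    have pos3: "\<forall>t\<in>{0..1}. 1 - t * eta n \<noteq> 0" "\<forall>t\<in>{0..1}. (1 - t * eta n)\<^sup>2 \<noteq> 0"
      "\<forall>t\<in>{0..1}. 1 + (1 - t * eta n)\<^sup>2 \<noteq> 0"
      using pos pos2 by force+
    have lt1: "\<And>x. 0 \<le> x \<Longrightarrow> x \<le> 1 \<Longrightarrow> x * eta n \<noteq> 1"
      using pos by force
    show "continuous_on {0..1} (\<lambda>t. cfg (ep n) (1 - t * eta n) v)"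
      using \<open>v \<in> verts Toct\<close> unfolding cfg_def verts_Toct
      by (auto intro!: cont_vec3 continuous_intros simp: pos3 lt1)
  qed
  show "\<forall>v\<in>verts Toct. cfg (ep n) (1 - 0 * eta n) v = cfg (ep n) 1 v" by simp
  show "\<forall>t\<in>{0..1}. \<forall>F\<in>Toct. \<forall>a\<in>F. \<forall>b\<in>F. dist (cfg (ep n) (1 - t * eta n) a) (cfg (ep n) (1 - t * eta n) b)
     = dist (cfg (ep n) 1 a) (cfg (ep n) 1 b)"
    using face_dist[OF mrange_t mrange1] by auto
  show "\<not> (\<forall>t\<in>{0..1}. \<exists>g :: real^3 \<Rightarrow> real^3. (\<forall>x y. dist (g x) (g y) = dist x y) \<and>
      (\<forall>v\<in>verts Toct. g (cfg (ep n) 1 v) = cfg (ep n) (1 - t * eta n) v))"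
  proof
    assume "\<forall>t\<in>{0..1}. \<exists>g :: real^3 \<Rightarrow> real^3. (\<forall>x y. dist (g x) (g y) = dist x y) \<and>
      (\<forall>v\<in>verts Toct. g (cfg (ep n) 1 v) = cfg (ep n) (1 - t * eta n) v)"
    moreover have "(1::real) \<in> {0..1}" by simp
    ultimately obtain g :: "real^3 \<Rightarrow> real^3" where g: "\<forall>x y. dist (g x) (g y) = dist x y"
      "\<forall>v\<in>verts Toct. g (cfg (ep n) 1 v) = cfg (ep n) (1 - 1 * eta n) v" by fastforce
    define m where "m = 1 - eta n"
    have mr: "mrange (ep n) m" using mrange_t[of 1 n] by (simp add: m_def)
    have "dist (cfg (ep n) m 2) (cfg (ep n) m 4) = dist (cfg (ep n) 1 2) (cfg (ep n) 1 4)"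
      using g by (metis m_def mult_1 verts_Toct insertCI)
    then have "4*m\<^sup>2/(1+m\<^sup>2) = 4*1\<^sup>2/(1+1\<^sup>2)" using d24sq[OF mr] d24sq[OF mrange1, of "ep n"] by metis
    moreover have p: "1 + m\<^sup>2 \<noteq> 0" by (metis add_pos_nonneg zero_less_one zero_le_power2 less_irrefl)
    ultimately have "4*m\<^sup>2 = 2*(1+m\<^sup>2)" by (simp add: divide_eq_eq)
    then have "m\<^sup>2 = 1" by (simp add: algebra_simps)
    moreover have "0 < m" "m < 1" using mr eta0 by (auto simp: mrange_def m_def)
    ultimately show False by (metis power2_eq_1_iff less_irrefl neg_0_less_iff_less less_trans zero_less_one)
  qed
qed



definition vmap :: "(nat \<Rightarrow> real) \<Rightarrow> real^3" where
  "vmap x = vector [x 0 - x 1, x 2 - x 4, x 3 - x 5]"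
definition wmap :: "real^3 \<Rightarrow> nat \<Rightarrow> real" where
  "wmap y i = (if i = 0 then max (y$1) 0 else if i = 1 then max (-(y$1)) 0
     else if i = 2 then max (y$2) 0 else if i = 4 then max (-(y$2)) 0
     else if i = 3 then max (y$3) 0 else if i = 5 then max (-(y$3)) 0 else 0)"
definition O1 :: "(real^3) set" where "O1 = {y. \<bar>y$1\<bar> + \<bar>y$2\<bar> + \<bar>y$3\<bar> = 1}"

lemma maxlem: "0 \<le> (a::real) \<Longrightarrow> 0 \<le> b \<Longrightarrow> a * b = 0 \<Longrightarrow>
  max (a - b) 0 = a \<and> max (-(a - b)) 0 = b \<and> \<bar>a - b\<bar> = a + b"
  by (cases "a = 0") auto

lemma face_sum: "a \<noteq> b \<Longrightarrow> a \<noteq> c \<Longrightarrow> b \<noteq> c \<Longrightarrow> (\<Sum>i\<in>{a,b,c}. x i) = x a + x b + (x c :: real)"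
  by simp

lemma real_facts:
  assumes "x \<in> realization Toct"
  shows "(\<forall>i. 0 \<le> x i) \<and> x 0 * x 1 = 0 \<and> x 2 * x 4 = 0 \<and> x 3 * x 5 = 0 \<and> (\<forall>i>5. x i = 0)
    \<and> x 0 + x 1 + x 2 + x 3 + x 4 + x 5 = 1"
proof -
  obtain F where F: "F \<in> Toct" "\<forall>i. i \<notin> F \<longrightarrow> x i = 0" "\<forall>i. 0 \<le> x i" "(\<Sum>i\<in>F. x i) = 1"
    using assms unfolding realization_def by blast
  have z: "\<And>i. i \<notin> F \<Longrightarrow> x i = 0" using F by blast
  from F(1) have "F = {0,2,3} \<or> F = {0,4,3} \<or> F = {0,2,5} \<or> F = {0,4,5} \<or>
     F = {1,2,3} \<or> F = {1,4,3} \<or> F = {1,2,5} \<or> F = {1,4,5}" (is ?disj) using F(1) unfolding Toct_def by simp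
  note disj = this
  then have Fs: "F \<subseteq> {0,1,2,3,4,5}" by (elim disjE) auto
  have big: "\<forall>i>5. x i = 0"
  proof (intro allI impI)
    fix i :: nat assume "5 < i"
    then have "i \<notin> F" using Fs by auto
    then show "x i = 0" by (rule z)
  qed
  from disj have "x 0 * x 1 = 0 \<and> x 2 * x 4 = 0 \<and> x 3 * x 5 = 0 \<and> x 0 + x 1 + x 2 + x 3 + x 4 + x 5 = 1"
    using F(4) z[of 0] z[of 1] z[of 2] z[of 3] z[of 4] z[of 5]
    apply (elim disjE)
    apply (simp add: face_sum)
    apply (simp add: face_sum)
    apply (simp add: face_sum)
    apply (simp add: face_sum)
    apply (simp add: face_sum)
    apply (simp add: face_sum)
    apply (simp add: face_sum)
    apply (simp add: face_sum)
    done
  then show ?thesis using F(3) big by blast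
qed

lemma real_part1:
  assumes "x \<in> realization Toct"
  shows "vmap x \<in> O1 \<and> wmap (vmap x) = x"
proof -
  note R = real_facts[OF assms]
  have m1: "max (x 0 - x 1) 0 = x 0 \<and> max (-(x 0 - x 1)) 0 = x 1 \<and> \<bar>x 0 - x 1\<bar> = x 0 + x 1"
    using R by (intro maxlem) auto
  have m2: "max (x 2 - x 4) 0 = x 2 \<and> max (-(x 2 - x 4)) 0 = x 4 \<and> \<bar>x 2 - x 4\<bar> = x 2 + x 4"
    using R by (intro maxlem) auto
  have m3: "max (x 3 - x 5) 0 = x 3 \<and> max (-(x 3 - x 5)) 0 = x 5 \<and> \<bar>x 3 - x 5\<bar> = x 3 + x 5"
    using R by (intro maxlem) auto
  have "wmap (vmap x) i = x i" for i
  proof -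
    have "i = 0 \<or> i = 1 \<or> i = 2 \<or> i = 3 \<or> i = 4 \<or> i = 5 \<or> i > 5" by linarith
    then show ?thesis using m1 m2 m3 R unfolding wmap_def vmap_def by auto
  qed
  moreover have "vmap x \<in> O1"
    using m1 m2 m3 R unfolding O1_def vmap_def by auto
  ultimately show ?thesis by auto
qed



lemma real_part2:
  assumes "y \<in> O1"
  shows "wmap y \<in> realization Toct \<and> vmap (wmap y) = y"
proof
  show "vmap (wmap y) = y"
    by (simp add: vmap_def wmap_def vec_eq_iff forall_3 max_def)
  define F where "F = {if y$1 \<ge> 0 then 0 else 1, if y$2 \<ge> 0 then 2 else 4, if y$3 \<ge> 0 then 3 else (5::nat)}"
  have "F \<in> Toct" unfolding F_def Toct_def by auto
  moreover have "\<forall>i. i \<notin> F \<longrightarrow> wmap y i = 0"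
    unfolding F_def wmap_def by auto
  moreover have "\<forall>i. 0 \<le> wmap y i" unfolding wmap_def by auto
  moreover have "(\<Sum>i\<in>F. wmap y i) = 1"
    using assms unfolding F_def wmap_def O1_def by auto
  ultimately show "wmap y \<in> realization Toct"
    unfolding realization_def by blast
qed

lemma real_homeo: "realization Toct homeomorphic O1"
  unfolding homeomorphic_minimal
proof (intro exI conjI)
  show "\<forall>x\<in>realization Toct. vmap x \<in> O1 \<and> wmap (vmap x) = x" using real_part1 by blast
  show "\<forall>y\<in>O1. wmap y \<in> realization Toct \<and> vmap (wmap y) = y" using real_part2 by blast
  have c: "\<And>i. continuous_on (realization Toct) (\<lambda>x::nat\<Rightarrow>real. x i)"
    by (rule continuous_on_subset[OF continuous_on_product_coordinates]) simp
  show "continuous_on (realization Toct) vmap"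
    unfolding vmap_def by (intro cont_vec3 continuous_on_diff c)
  show "continuous_on O1 wmap"
  proof (rule continuous_on_coordinatewise_then_product)
    fix i
    show "continuous_on O1 (\<lambda>y. wmap y i)"
      unfolding wmap_def
      by (cases "i=0"; cases "i=1"; cases "i=2"; cases "i=4"; cases "i=3"; cases "i=5")
        (simp_all add: continuous_intros)
  qed
qed

definition l1 :: "real^3 \<Rightarrow> real" where "l1 y = \<bar>y$1\<bar> + \<bar>y$2\<bar> + \<bar>y$3\<bar>"

lemma l1_pos: "y \<noteq> 0 \<Longrightarrow> 0 < l1 y"
proof -
  assume "y \<noteq> 0"
  then have "\<exists>i. y$i \<noteq> 0" by (simp add: vec_eq_iff)
  then obtain i where "y$i \<noteq> 0" by blast
  moreover have "i = 1 \<or> i = 2 \<or> i = 3" by (rule exhaust_3)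
  ultimately show ?thesis unfolding l1_def by auto
qed

lemma l1_scale: "l1 (c *\<^sub>R y) = \<bar>c\<bar> * l1 y"
  by (simp add: l1_def abs_mult algebra_simps)

lemma O1_homeo: "O1 homeomorphic sphere (0::real^3) 1"
  unfolding homeomorphic_minimal
proof (intro exI conjI)
  have O1l: "O1 = {y. l1 y = 1}" by (simp add: O1_def l1_def)
  have nz: "y \<in> O1 \<Longrightarrow> y \<noteq> 0" for y by (auto simp: O1l l1_def)
  show "\<forall>x\<in>O1. (inverse (norm x) *\<^sub>R x) \<in> sphere 0 1 \<and> inverse (l1 (inverse (norm x) *\<^sub>R x)) *\<^sub>R (inverse (norm x) *\<^sub>R x) = x"
  proof
    fix x assume x: "x \<in> O1"
    then have "x \<noteq> 0" by (rule nz)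
    then have np: "norm x > 0" by simp
    have "l1 (inverse (norm x) *\<^sub>R x) = inverse (norm x)" using x np by (simp add: l1_scale O1l)
    then show "(inverse (norm x) *\<^sub>R x) \<in> sphere 0 1 \<and> inverse (l1 (inverse (norm x) *\<^sub>R x)) *\<^sub>R (inverse (norm x) *\<^sub>R x) = x"
      using np by (simp add: norm_scaleR)
  qed
  show "\<forall>y\<in>sphere 0 1. inverse (l1 y) *\<^sub>R y \<in> O1 \<and> inverse (norm (inverse (l1 y) *\<^sub>R y)) *\<^sub>R (inverse (l1 y) *\<^sub>R y) = y"
  proof
    fix y :: "real^3" assume y: "y \<in> sphere 0 1"
    then have "y \<noteq> 0" by auto
    then have lp: "l1 y > 0" by (rule l1_pos)
    have "inverse (l1 y) *\<^sub>R y \<in> O1" using lp by (simp add: O1l l1_scale)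
    moreover have "norm (inverse (l1 y) *\<^sub>R y) = inverse (l1 y)" using y lp by simp
    ultimately show "inverse (l1 y) *\<^sub>R y \<in> O1 \<and> inverse (norm (inverse (l1 y) *\<^sub>R y)) *\<^sub>R (inverse (l1 y) *\<^sub>R y) = y"
      using lp by simp
  qed
  show "continuous_on O1 (\<lambda>x. inverse (norm x) *\<^sub>R x)"
    by (auto intro!: continuous_intros dest: nz)
  show "continuous_on (sphere 0 1) (\<lambda>y. inverse (l1 y) *\<^sub>R y)"
  proof (intro continuous_intros)
    show "continuous_on (sphere 0 1) l1" unfolding l1_def by (intro continuous_intros)
    show "\<forall>x\<in>sphere 0 1. l1 x \<noteq> 0"
    proof
      fix x :: "real^3" assume "x \<in> sphere 0 1"
      then have "x \<noteq> 0" by auto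
      then show "l1 x \<noteq> 0" using l1_pos[of x] by simp
    qed
  qed
qed

lemma sphere_Toct: "sphere_homeomorphic Toct"
  unfolding sphere_homeomorphic_def using real_homeo O1_homeo by (rule homeomorphic_trans)



lemma conv5: "(\<lambda>n. cfg (ep n) 1 v) \<longlonglongrightarrow> cfg 0 1 v"
proof (cases "v = 5")
  case True
  have eq: "cfg (ep n) 1 v = cfg 0 1 v + ep n *\<^sub>R vector [0,0,1]" for n
    using True ep_bounds[of n] by (simp add: cfg1 vec_eq_iff forall_3)
  have "(\<lambda>n. cfg 0 1 v + ep n *\<^sub>R (vector [0,0,1] :: real^3)) \<longlonglongrightarrow> cfg 0 1 v + 0 *\<^sub>R vector [0,0,1]"
    by (intro tendsto_intros) (unfold ep_def, rule LIMSEQ_inverse_real_of_nat)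
  then show ?thesis by (simp add: eq)
next
  case False
  have "cfg (ep n) 1 v = cfg 0 1 v" for n
    using False ep_bounds[of n] by (simp add: cfg1)
  then show ?thesis by simp
qed

theorem theorem1:
  shows "\<exists>(T :: nat set set) (p :: nat \<Rightarrow> real^3).
     complex2 T \<and> sphere_homeomorphic T \<and> nondegenerate T p \<and> \<not> flexible T p \<and>
     (\<exists>P :: nat \<Rightarrow> nat \<Rightarrow> real^3.
        (\<forall>n. nondegenerate T (P n) \<and> flexible T (P n)) \<and>
        (\<forall>v\<in>verts T. (\<lambda>n. P n v) \<longlonglongrightarrow> p v))"
proof (intro exI conjI)
  show "complex2 Toct" unfolding complex2_def Toct_def by simp
  show "sphere_homeomorphic Toct" by (rule sphere_Toct)
  show "nondegenerate Toct (cfg 0 1)" by (rule nondeg_cfg1) simp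
  show "\<forall>n. nondegenerate Toct (cfg (ep n) 1) \<and> flexible Toct (cfg (ep n) 1)"
    using nondeg_cfg1 flex_P ep_bounds by (simp add: less_imp_le)
  show "\<forall>v\<in>verts Toct. (\<lambda>n. cfg (ep n) 1 v) \<longlonglongrightarrow> cfg 0 1 v" using conv5 by blast
  show "\<not> flexible Toct (cfg 0 1)"
    unfolding flexible_def
  proof
    assume "\<exists>f :: real \<Rightarrow> nat \<Rightarrow> real^3.
      (\<forall>v\<in>verts Toct. continuous_on {0..1} (\<lambda>t. f t v)) \<and>
      (\<forall>v\<in>verts Toct. f 0 v = cfg 0 1 v) \<and>
      (\<forall>t\<in>{0..1}. \<forall>F\<in>Toct. \<forall>a\<in>F. \<forall>b\<in>F. dist (f t a) (f t b) = dist (cfg 0 1 a) (cfg 0 1 b)) \<and>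
      \<not> (\<forall>t\<in>{0..1}. \<exists>g :: real^3 \<Rightarrow> real^3.
            (\<forall>x y. dist (g x) (g y) = dist x y) \<and> (\<forall>v\<in>verts Toct. g (cfg 0 1 v) = f t v))"
    then obtain f :: "real \<Rightarrow> nat \<Rightarrow> real^3" where
      d: "\<forall>t\<in>{0..1}. \<forall>F\<in>Toct. \<forall>a\<in>F. \<forall>b\<in>F. dist (f t a) (f t b) = dist (cfg 0 1 a) (cfg 0 1 b)" and
      n: "\<not> (\<forall>t\<in>{0..1}. \<exists>g :: real^3 \<Rightarrow> real^3.
            (\<forall>x y. dist (g x) (g y) = dist x y) \<and> (\<forall>v\<in>verts Toct. g (cfg 0 1 v) = f t v))"
      by blast
    have "\<forall>t\<in>{0..1}. \<exists>g :: real^3 \<Rightarrow> real^3.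
            (\<forall>x y. dist (g x) (g y) = dist x y) \<and> (\<forall>v\<in>verts Toct. g (cfg 0 1 v) = f t v)"
    proof
      fix t :: real assume "t \<in> {0..1}"
      then show "\<exists>g :: real^3 \<Rightarrow> real^3.
            (\<forall>x y. dist (g x) (g y) = dist x y) \<and> (\<forall>v\<in>verts Toct. g (cfg 0 1 v) = f t v)"
        using d by (intro rigid_core) blast
    qed
    with n show False by blast
  qed
qed


end
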